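(* Every generic Euclidean triangle is typical.
   Context: A Euclidean triangle with edge lengths $\ell_1,\ell_2,\ell_3$ and interior angles $\alpha_1,\alpha_2,\alpha_3$ is generic if for some real $k>0$ the numbers $k\ell_1,k\ell_2,k\ell_3$ are algebraically independent over $\mathbb{Q}$; it is typical if $\alpha_1,\alpha_2,\alpha_3$ are linearly independent over $\mathbb{Q}$. *)

theory Defs
  imports "HOL-Analysis.Analysis"
begin

definition vertex_angle :: "real^2 \<Rightarrow> real^2 \<Rightarrow> real^2 \<Rightarrow> real" where
  "vertex_angle P Q R = arccos (((Q - P) \<bullet> (R - P)) / (norm (Q - P) * norm (R - P)))"

definition alg_indep3 :: "real \<Rightarrow> real \<Rightarrow> real \<Rightarrow> bool" where
  "alg_indep3 x y z \<longleftrightarrow>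
     (\<forall>(n::nat) (c::nat \<Rightarrow> nat \<Rightarrow> nat \<Rightarrow> rat).
        (\<Sum>i\<le>n. \<Sum>j\<le>n. \<Sum>k\<le>n. of_rat (c i j k) * x ^ i * y ^ j * z ^ k) = 0
        \<longrightarrow> (\<forall>i\<le>n. \<forall>j\<le>n. \<forall>k\<le>n. c i j k = 0))"

definition lin_indep3_Q :: "real \<Rightarrow> real \<Rightarrow> real \<Rightarrow> bool" where
  "lin_indep3_Q x y z \<longleftrightarrow>
     (\<forall>a b c :: rat. of_rat a * x + of_rat b * y + of_rat c * z = 0 \<longrightarrow> a = 0 \<and> b = 0 \<and> c = 0)"

text \<open>Triangle with vertices A1 A2 A3; edge length l_i is opposite vertex A_i.\<close>
definition generic_triangle :: "real^2 \<Rightarrow> real^2 \<Rightarrow> real^2 \<Rightarrow> bool" where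
  "generic_triangle A1 A2 A3 \<longleftrightarrow>
     (\<exists>k>0. alg_indep3 (k * dist A2 A3) (k * dist A1 A3) (k * dist A1 A2))"

definition typical_triangle :: "real^2 \<Rightarrow> real^2 \<Rightarrow> real^2 \<Rightarrow> bool" where
  "typical_triangle A1 A2 A3 \<longleftrightarrow>
     lin_indep3_Q (vertex_angle A1 A2 A3) (vertex_angle A2 A1 A3) (vertex_angle A3 A1 A2)"

end

theory Submission
  imports Defs
begin


definition mono3 :: "nat\<times>nat\<times>nat \<Rightarrow> real \<Rightarrow> real \<Rightarrow> real \<Rightarrow> real" where
  "mono3 m x y z = x ^ fst m * y ^ fst (snd m) * z ^ snd (snd m)"

definition Mform :: "(real \<Rightarrow> real \<Rightarrow> real \<Rightarrow> real) \<Rightarrow> bool" where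
  "Mform f \<longleftrightarrow> (\<exists>M c. finite M \<and> (\<forall>x y z. f x y z = (\<Sum>m\<in>M. of_rat (c m) * mono3 m x y z)))"

lemma Mform_add:
  assumes "Mform f" "Mform g" shows "Mform (\<lambda>x y z. f x y z + g x y z)"
proof -
  obtain M1 c1 where 1: "finite M1" "\<And>x y z. f x y z = (\<Sum>m\<in>M1. of_rat (c1 m) * mono3 m x y z)"
    using assms(1) unfolding Mform_def by blast
  obtain M2 c2 where 2: "finite M2" "\<And>x y z. g x y z = (\<Sum>m\<in>M2. of_rat (c2 m) * mono3 m x y z)"
    using assms(2) unfolding Mform_def by blast
  define c where "c m = (if m \<in> M1 then c1 m else 0) + (if m \<in> M2 then c2 m else 0)" for m
  have "f x y z + g x y z = (\<Sum>m\<in>M1 \<union> M2. of_rat (c m) * mono3 m x y z)" for x y z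
  proof -
    have a: "(\<Sum>m\<in>M1 \<union> M2. of_rat (if m \<in> M1 then c1 m else 0) * mono3 m x y z)
        = (\<Sum>m\<in>M1. of_rat (c1 m) * mono3 m x y z)"
      by (rule sum.mono_neutral_cong_right) (use 1 2 in auto)
    have b: "(\<Sum>m\<in>M1 \<union> M2. of_rat (if m \<in> M2 then c2 m else 0) * mono3 m x y z)
        = (\<Sum>m\<in>M2. of_rat (c2 m) * mono3 m x y z)"
      by (rule sum.mono_neutral_cong_right) (use 1 2 in auto)
    show ?thesis unfolding c_def using a b
      by (simp add: of_rat_add distrib_right sum.distrib 1 2)
  qed
  thus ?thesis unfolding Mform_def using 1 2 by blast
qed

lemma Mform_single: "Mform (\<lambda>x y z. of_rat q * mono3 m x y z)"
  unfolding Mform_def by (rule exI[of _ "{m}"], rule exI[of _ "\<lambda>_. q"]) simp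

lemma Mform_zero: "Mform (\<lambda>x y z. 0)"
  unfolding Mform_def by (rule exI[of _ "{}"]) simp

lemma Mform_sum:
  assumes "finite P"
  shows "Mform (\<lambda>x y z. \<Sum>p\<in>P. of_rat (d p) * mono3 (\<phi> p) x y z)"
  using assms
proof (induction P rule: finite_induct)
  case empty
  then show ?case using Mform_zero by simp
next
  case (insert p P)
  then show ?case using Mform_add[OF Mform_single[of "d p" "\<phi> p"] insert.IH] by simp
qed

definition addm :: "nat\<times>nat\<times>nat \<Rightarrow> nat\<times>nat\<times>nat \<Rightarrow> nat\<times>nat\<times>nat" where
  "addm a b = (fst a + fst b, fst (snd a) + fst (snd b), snd (snd a) + snd (snd b))"

lemma mono3_mult: "mono3 a x y z * mono3 b x y z = mono3 (addm a b) x y z"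
  unfolding mono3_def addm_def by (simp add: power_add algebra_simps)

lemma Mform_mult:
  assumes "Mform f" "Mform g" shows "Mform (\<lambda>x y z. f x y z * g x y z)"
proof -
  obtain M1 c1 where 1: "finite M1" "\<And>x y z. f x y z = (\<Sum>m\<in>M1. of_rat (c1 m) * mono3 m x y z)"
    using assms(1) unfolding Mform_def by blast
  obtain M2 c2 where 2: "finite M2" "\<And>x y z. g x y z = (\<Sum>m\<in>M2. of_rat (c2 m) * mono3 m x y z)"
    using assms(2) unfolding Mform_def by blast
  have e: "f x y z * g x y z = (\<Sum>p\<in>M1 \<times> M2. of_rat (c1 (fst p) * c2 (snd p)) * mono3 (addm (fst p) (snd p)) x y z)" for x y z
  proof -
    have "f x y z * g x y z = (\<Sum>a\<in>M1. \<Sum>b\<in>M2. (of_rat (c1 a) * mono3 a x y z) * (of_rat (c2 b) * mono3 b x y z))"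
      by (simp add: 1 2 sum_product)
    also have "\<dots> = (\<Sum>a\<in>M1. \<Sum>b\<in>M2. of_rat (c1 a * c2 b) * mono3 (addm a b) x y z)"
      by (simp add: of_rat_mult mono3_mult[symmetric] algebra_simps)
    also have "\<dots> = (\<Sum>p\<in>M1 \<times> M2. of_rat (c1 (fst p) * c2 (snd p)) * mono3 (addm (fst p) (snd p)) x y z)"
      by (simp add: sum.cartesian_product case_prod_beta)
    finally show ?thesis .
  qed
  have "Mform (\<lambda>x y z. \<Sum>p\<in>M1 \<times> M2. of_rat (c1 (fst p) * c2 (snd p)) * mono3 (addm (fst p) (snd p)) x y z)"
    by (rule Mform_sum) (use 1 2 in simp)
  thus ?thesis using e by simp
qed

inductive qp :: "(real \<Rightarrow> real \<Rightarrow> real \<Rightarrow> real) \<Rightarrow> bool" where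
  qp_const: "qp (\<lambda>x y z. of_rat q)"
| qp_x: "qp (\<lambda>x y z. x)"
| qp_y: "qp (\<lambda>x y z. y)"
| qp_z: "qp (\<lambda>x y z. z)"
| qp_add: "qp f \<Longrightarrow> qp g \<Longrightarrow> qp (\<lambda>x y z. f x y z + g x y z)"
| qp_mult: "qp f \<Longrightarrow> qp g \<Longrightarrow> qp (\<lambda>x y z. f x y z * g x y z)"

lemma qp_Mform: "qp f \<Longrightarrow> Mform f"
proof (induction rule: qp.induct)
  case (qp_const q)
  then show ?case using Mform_single[of q "(0,0,0)"] by (simp add: mono3_def)
next
  case qp_x
  then show ?case using Mform_single[of 1 "(1,0,0)"] by (simp add: mono3_def)
next
  case qp_y
  then show ?case using Mform_single[of 1 "(0,1,0)"] by (simp add: mono3_def)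
next
  case qp_z
  then show ?case using Mform_single[of 1 "(0,0,1)"] by (simp add: mono3_def)
next
  case (qp_add f g)
  then show ?case using Mform_add by blast
next
  case (qp_mult f g)
  then show ?case using Mform_mult by blast
qed

lemma qp_cong: "qp f \<Longrightarrow> (\<And>x y z. f x y z = g x y z) \<Longrightarrow> qp g"
proof -
  assume "qp f" "\<And>x y z. f x y z = g x y z"
  then have "f = g" by (intro ext) auto
  with \<open>qp f\<close> show "qp g" by simp
qed

lemma qp_num: "qp (\<lambda>x y z. c)" if "c \<in> \<rat>" for c
  using that qp_const by (metis Rats_cases)

lemma qp_diff: "qp f \<Longrightarrow> qp g \<Longrightarrow> qp (\<lambda>x y z. f x y z - g x y z)"
proof -
  assume "qp f" "qp g"
  have "qp (\<lambda>x y z. (-1) * g x y z)" by (rule qp_mult[OF qp_num \<open>qp g\<close>]) simp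
  from qp_add[OF \<open>qp f\<close> this] show ?thesis by (rule qp_cong) simp
qed

lemma qp_pow: "qp f \<Longrightarrow> qp (\<lambda>x y z. f x y z ^ n)"
proof (induction n)
  case 0
  then show ?case using qp_num[of 1] by simp
next
  case (Suc n)
  from qp_mult[OF Suc.prems Suc.IH[OF Suc.prems]] show ?case by (rule qp_cong) simp
qed

lemma generic_zero:
  assumes ai: "alg_indep3 a b c" and "qp f" and f0: "f a b c = 0"
  shows "f x y z = 0"
proof -
  obtain M cf where M: "finite M" "\<And>x y z. f x y z = (\<Sum>m\<in>M. of_rat (cf m) * mono3 m x y z)"
    using qp_Mform[OF \<open>qp f\<close>] unfolding Mform_def by blast
  define n where "n = Max ((\<lambda>m. fst m + fst (snd m) + snd (snd m)) ` M \<union> {0})"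
  have nb: "fst m \<le> n \<and> fst (snd m) \<le> n \<and> snd (snd m) \<le> n" if "m \<in> M" for m
  proof -
    have "fst m + fst (snd m) + snd (snd m) \<le> n"
      unfolding n_def using that M(1) by (intro Max_ge) auto
    thus ?thesis by auto
  qed
  define C where "C i j k = (if (i,j,k) \<in> M then cf (i,j,k) else 0)" for i j k
  have sumeq: "(\<Sum>i\<le>n. \<Sum>j\<le>n. \<Sum>k\<le>n. of_rat (C i j k) * u ^ i * v ^ j * w ^ k) = f u v w" for u v w
  proof -
    have "(\<Sum>i\<le>n. \<Sum>j\<le>n. \<Sum>k\<le>n. of_rat (C i j k) * u ^ i * v ^ j * w ^ k)
        = (\<Sum>m\<in>{..n} \<times> {..n} \<times> {..n}. of_rat (C (fst m) (fst (snd m)) (snd (snd m))) * mono3 m u v w)"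
      by (simp add: sum.cartesian_product mono3_def case_prod_beta mult.assoc)
    also have "\<dots> = (\<Sum>m\<in>M. of_rat (cf m) * mono3 m u v w)"
      by (rule sum.mono_neutral_cong_right) (use nb in \<open>auto simp: C_def\<close>)
    finally show ?thesis using M(2) by simp
  qed
  have "\<forall>i\<le>n. \<forall>j\<le>n. \<forall>k\<le>n. C i j k = 0"
  proof -
    have "(\<Sum>i\<le>n. \<Sum>j\<le>n. \<Sum>k\<le>n. of_rat (C i j k) * a ^ i * b ^ j * c ^ k) = 0"
      using sumeq[of a b c] f0 by simp
    thus ?thesis using ai unfolding alg_indep3_def by blast
  qed
  hence "cf m = 0" if "m \<in> M" for m
    using nb[OF that] that unfolding C_def by (cases m) force
  thus ?thesis using M(2) by simp
qed



definition Dh :: "real \<Rightarrow> real \<Rightarrow> real \<Rightarrow> real" where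
  "Dh x y z = 2*x^2*y^2 + 2*y^2*z^2 + 2*z^2*x^2 - x^4 - y^4 - z^4"

definition cA :: "real \<Rightarrow> real \<Rightarrow> real \<Rightarrow> real" where
  "cA x y z = y^2 + z^2 - x^2"

definition Aang :: "real \<Rightarrow> real \<Rightarrow> real \<Rightarrow> real" where
  "Aang x y z = arccos (cA x y z / (2*y*z))"

lemma Dh_sym1: "Dh y x z = Dh x y z" and Dh_sym2: "Dh z x y = Dh x y z"
  unfolding Dh_def by algebra+

lemma Dh_cA: "4*y^2*z^2 - (cA x y z)^2 = Dh x y z"
  unfolding Dh_def cA_def by algebra

lemma Aang_bound:
  assumes "y > 0" "z > 0" "Dh x y z > 0"
  shows "\<bar>cA x y z / (2*y*z)\<bar> < 1"
proof -
  have "(cA x y z)^2 < (2*y*z)^2" using Dh_cA[of y z x] assms(3) by (simp add: power_mult_distrib)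
  hence "\<bar>cA x y z\<bar> < \<bar>2*y*z\<bar>" using abs_less_iff power2_less_imp_less
    by (metis abs_ge_zero real_sqrt_abs real_sqrt_less_iff)
  thus ?thesis using assms by (simp add: abs_divide divide_less_eq)
qed

lemma Aang_pos:
  assumes "y > 0" "z > 0" "Dh x y z > 0"
  shows "Aang x y z > 0"
proof -
  have "\<bar>cA x y z / (2*y*z)\<bar> < 1" by (rule Aang_bound[OF assms])
  hence "-1 < cA x y z / (2*y*z)" "cA x y z / (2*y*z) < 1" by (simp_all only: abs_less_iff, linarith+)
  thus ?thesis unfolding Aang_def using arccos_lt_bounded by blast
qed

lemma Aang_cis:
  assumes "y > 0" "z > 0" "Dh x y z > 0" and s: "s = 1 \<or> s = -1"
  shows "cis (s * Aang x y z) = Complex (cA x y z) (s * sqrt (Dh x y z)) / (2*y*z)"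
proof -
  let ?u = "cA x y z / (2*y*z)"
  have b: "\<bar>?u\<bar> \<le> 1" using Aang_bound[OF assms(1-3)] by simp
  have c: "cos (Aang x y z) = ?u" unfolding Aang_def using cos_arccos_abs[OF b] .
  have "(2*y*z)^2 = Dh x y z + (cA x y z)^2" using Dh_cA[of y z x] by (simp add: power_mult_distrib)
  moreover have "(2*y*z)^2 \<noteq> 0" using assms by simp
  ultimately have "1 - ?u^2 = Dh x y z / (2*y*z)^2"
    by (simp add: power_divide field_simps)
  hence "sqrt (1 - ?u^2) = sqrt (Dh x y z) / (2*y*z)"
    using assms by (simp add: real_sqrt_divide)
  hence sn: "sin (Aang x y z) = sqrt (Dh x y z) / (2*y*z)"
    unfolding Aang_def using sin_arccos_abs[OF b] by simp
  show ?thesis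
    using s c sn assms by (auto simp: cis.ctr complex_eq_iff Complex_eq field_simps)
qed

type_synonym rf = "real \<Rightarrow> real \<Rightarrow> real \<Rightarrow> real"

definition pmul :: "rf \<times> rf \<Rightarrow> rf \<times> rf \<Rightarrow> rf \<times> rf" where
  "pmul u v = (\<lambda>x y z. fst u x y z * fst v x y z - Dh x y z * (snd u x y z * snd v x y z),
               \<lambda>x y z. fst u x y z * snd v x y z + snd u x y z * fst v x y z)"

fun ppow :: "rf \<times> rf \<Rightarrow> nat \<Rightarrow> rf \<times> rf" where
  "ppow u 0 = (\<lambda>x y z. 1, \<lambda>x y z. 0)"
| "ppow u (Suc n) = pmul u (ppow u n)"

definition pev :: "rf \<times> rf \<Rightarrow> real \<Rightarrow> real \<Rightarrow> real \<Rightarrow> complex" where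
  "pev u x y z = Complex (fst u x y z) (sqrt (Dh x y z) * snd u x y z)"

lemma pev_mul: "Dh x y z \<ge> 0 \<Longrightarrow> pev (pmul u v) x y z = pev u x y z * pev v x y z"
  unfolding pev_def pmul_def
  by (simp add: complex_eq_iff algebra_simps power2_eq_square[symmetric])

lemma pev_pow: "Dh x y z \<ge> 0 \<Longrightarrow> pev (ppow u n) x y z = pev u x y z ^ n"
  by (induction n) (auto simp: pev_mul, simp add: pev_def one_complex.ctr)

definition qpp :: "rf \<times> rf \<Rightarrow> bool" where
  "qpp u \<longleftrightarrow> qp (fst u) \<and> qp (snd u)"

lemma qp_Dh: "qp Dh"
proof -
  have "qp (\<lambda>x y z. ((2*x^2*y^2 + 2*y^2*z^2) + 2*z^2*x^2) - x^4 - y^4 - z^4)"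
    by (intro qp_diff qp_add qp_mult qp_pow qp_x qp_y qp_z qp_num) auto
  thus ?thesis unfolding Dh_def[abs_def] by simp
qed

lemma qp_cA: "qp cA"
proof -
  have "qp (\<lambda>x y z. y^2 + z^2 - x^2)"
    by (intro qp_diff qp_add qp_pow qp_x qp_y qp_z)
  thus ?thesis unfolding cA_def[abs_def] by simp
qed

lemma qpp_mul: "qpp u \<Longrightarrow> qpp v \<Longrightarrow> qpp (pmul u v)"
  unfolding qpp_def pmul_def using qp_Dh
  by (auto intro!: qp_diff qp_add qp_mult)

lemma qpp_pow: "qpp u \<Longrightarrow> qpp (ppow u n)"
proof (induction n)
  case 0
  then show ?case by (auto simp: qpp_def intro: qp_num)
next
  case (Suc n)
  then show ?case using qpp_mul by simp
qed



definition sg :: "int \<Rightarrow> real" where "sg n = (if n \<ge> 0 then 1 else -1)"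

lemma sg_n: "real_of_int n = sg n * real (nat \<bar>n\<bar>)" and sg_pm: "sg n = 1 \<or> sg n = -1"
  unfolding sg_def by auto

definition ff :: "int \<Rightarrow> int \<Rightarrow> int \<Rightarrow> real \<Rightarrow> real \<Rightarrow> real \<Rightarrow> real" where
  "ff n1 n2 n3 x y z = of_int n1 * Aang x y z + of_int n2 * Aang y x z + of_int n3 * Aang z x y"

definition Wp :: "int \<Rightarrow> int \<Rightarrow> int \<Rightarrow> rf \<times> rf" where
  "Wp n1 n2 n3 = pmul (ppow (cA, \<lambda>x y z. sg n1) (nat \<bar>n1\<bar>))
     (pmul (ppow (\<lambda>x y z. cA y x z, \<lambda>x y z. sg n2) (nat \<bar>n2\<bar>))
           (ppow (\<lambda>x y z. cA z x y, \<lambda>x y z. sg n3) (nat \<bar>n3\<bar>)))"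

definition Rf :: "int \<Rightarrow> int \<Rightarrow> int \<Rightarrow> rf" where
  "Rf n1 n2 n3 x y z = (2*y*z)^nat \<bar>n1\<bar> * (2*x*z)^nat \<bar>n2\<bar> * (2*x*y)^nat \<bar>n3\<bar>"

lemma cis_term:
  assumes "cis (sg n * \<theta>) = pev u x y z / r" "Dh x y z \<ge> 0"
  shows "cis (of_int n * \<theta>) = pev (ppow u (nat \<bar>n\<bar>)) x y z / r ^ nat \<bar>n\<bar>"
proof -
  have "cis (of_int n * \<theta>) = cis (real (nat \<bar>n\<bar>) * (sg n * \<theta>))"
    by (simp only: sg_n[of n] ac_simps)
  also have "\<dots> = cis (sg n * \<theta>) ^ nat \<bar>n\<bar>" by (rule Complex.DeMoivre[symmetric])
  also have "\<dots> = pev (ppow u (nat \<bar>n\<bar>)) x y z / r ^ nat \<bar>n\<bar>"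
    by (simp add: assms pev_pow power_divide)
  finally show ?thesis .
qed

lemma cis_ff:
  assumes "x > 0" "y > 0" "z > 0" "Dh x y z > 0"
  shows "cis (ff n1 n2 n3 x y z) = pev (Wp n1 n2 n3) x y z / complex_of_real (Rf n1 n2 n3 x y z)"
proof -
  have D0: "Dh x y z \<ge> 0" using assms by simp
  have c1: "cis (sg n1 * Aang x y z) = pev (cA, \<lambda>x y z. sg n1) x y z / complex_of_real (2*y*z)"
    using Aang_cis[OF assms(2,3,4) sg_pm[of n1]] by (simp add: pev_def mult.commute)
  have c2: "cis (sg n2 * Aang y x z) = pev (\<lambda>x y z. cA y x z, \<lambda>x y z. sg n2) x y z / complex_of_real (2*x*z)"
    using Aang_cis[of x z y "sg n2"] assms sg_pm[of n2] by (simp add: pev_def mult.commute Dh_sym1)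
  have c3: "cis (sg n3 * Aang z x y) = pev (\<lambda>x y z. cA z x y, \<lambda>x y z. sg n3) x y z / complex_of_real (2*x*y)"
    using Aang_cis[of x y z "sg n3"] assms sg_pm[of n3] by (simp add: pev_def mult.commute Dh_sym2)
  have "cis (ff n1 n2 n3 x y z) = cis (of_int n1 * Aang x y z) * (cis (of_int n2 * Aang y x z) * cis (of_int n3 * Aang z x y))"
    unfolding ff_def by (simp add: cis_mult add.assoc)
  also have "\<dots> = pev (Wp n1 n2 n3) x y z / complex_of_real (Rf n1 n2 n3 x y z)"
    unfolding cis_term[OF c1 D0] cis_term[OF c2 D0] cis_term[OF c3 D0] Wp_def Rf_def
    by (simp add: pev_mul[OF D0])
  finally show ?thesis .
qed

lemma Rf_pos: "x > 0 \<Longrightarrow> y > 0 \<Longrightarrow> z > 0 \<Longrightarrow> Rf n1 n2 n3 x y z > 0"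
  unfolding Rf_def by simp

lemma qp_Rf: "qp (Rf n1 n2 n3)"
proof -
  have "qp (\<lambda>x y z. (2*y*z)^nat \<bar>n1\<bar> * (2*x*z)^nat \<bar>n2\<bar> * (2*x*y)^nat \<bar>n3\<bar>)"
    by (intro qp_mult qp_pow qp_x qp_y qp_z qp_num) auto
  thus ?thesis unfolding Rf_def[abs_def] by simp
qed

lemma qpp_Wp: "qpp (Wp n1 n2 n3)"
proof -
  have a: "qp (\<lambda>x y z. sg n)" for n using sg_pm[of n] by (auto intro: qp_num)
  have b: "qp (\<lambda>x y z. cA y x z)" "qp (\<lambda>x y z. cA z x y)"
    unfolding cA_def by (intro qp_diff qp_add qp_pow qp_x qp_y qp_z)+
  show ?thesis unfolding Wp_def
    by (intro qpp_mul qpp_pow) (auto simp: qpp_def a b qp_cA)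
qed

lemma cis_one_iff:
  assumes "x > 0" "y > 0" "z > 0" "Dh x y z > 0"
  shows "cis (ff n1 n2 n3 x y z) = 1 \<longleftrightarrow>
     fst (Wp n1 n2 n3) x y z - Rf n1 n2 n3 x y z = 0 \<and> snd (Wp n1 n2 n3) x y z = 0"
proof -
  have R: "Rf n1 n2 n3 x y z \<noteq> 0" using Rf_pos[OF assms(1-3), of n1 n2 n3] by simp
  have S: "sqrt (Dh x y z) \<noteq> 0" using assms by simp
  have "cis (ff n1 n2 n3 x y z) = 1 \<longleftrightarrow> pev (Wp n1 n2 n3) x y z = complex_of_real (Rf n1 n2 n3 x y z)"
    unfolding cis_ff[OF assms] using R by (simp only: divide_eq_1_iff of_real_eq_0_iff simp_thms)
  also have "\<dots> \<longleftrightarrow> fst (Wp n1 n2 n3) x y z = Rf n1 n2 n3 x y z \<and> sqrt (Dh x y z) * snd (Wp n1 n2 n3) x y z = 0"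
    unfolding pev_def complex_eq_iff by simp
  also have "\<dots> \<longleftrightarrow> fst (Wp n1 n2 n3) x y z - Rf n1 n2 n3 x y z = 0 \<and> snd (Wp n1 n2 n3) x y z = 0"
    using S by simp
  finally show ?thesis .
qed

lemma spread:
  assumes ai: "alg_indep3 X Y Z" and P0: "X > 0" "Y > 0" "Z > 0" "Dh X Y Z > 0"
    and f0: "ff n1 n2 n3 X Y Z = 0"
    and Q: "x > 0" "y > 0" "z > 0" "Dh x y z > 0"
  shows "cis (ff n1 n2 n3 x y z) = 1"
proof -
  have "fst (Wp n1 n2 n3) X Y Z - Rf n1 n2 n3 X Y Z = 0 \<and> snd (Wp n1 n2 n3) X Y Z = 0"
    using cis_one_iff[OF P0, of n1 n2 n3] f0 by simp
  moreover have "qp (\<lambda>x y z. fst (Wp n1 n2 n3) x y z - Rf n1 n2 n3 x y z)"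
    using qpp_Wp qp_Rf unfolding qpp_def by (intro qp_diff) auto
  moreover have "qp (snd (Wp n1 n2 n3))" using qpp_Wp unfolding qpp_def by auto
  ultimately have "fst (Wp n1 n2 n3) x y z - Rf n1 n2 n3 x y z = 0 \<and> snd (Wp n1 n2 n3) x y z = 0"
    using generic_zero[OF ai, of "\<lambda>x y z. fst (Wp n1 n2 n3) x y z - Rf n1 n2 n3 x y z"]
      generic_zero[OF ai, of "snd (Wp n1 n2 n3)"] by blast
  thus ?thesis using cis_one_iff[OF Q, of n1 n2 n3] by simp
qed



lemma Dh_iso: "Dh x 1 1 = x^2 * (4 - x^2)" "Dh 1 x 1 = x^2 * (4 - x^2)" "Dh 1 1 x = x^2 * (4 - x^2)"
  unfolding Dh_def by (simp_all add: eval_nat_numeral algebra_simps)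

lemma iso_vals:
  assumes "0 < t" "t < pi/2"
  shows "Aang (2*cos t) 1 1 = pi - 2*t" "Aang 1 (2*cos t) 1 = t" "Aang 1 1 (2*cos t) = t"
    "Dh (2*cos t) 1 1 > 0" "Dh 1 (2*cos t) 1 > 0" "Dh 1 1 (2*cos t) > 0"
proof -
  have ct: "cos t > 0" using assms by (intro cos_gt_zero) auto
  have ct1: "cos t < 1" using assms cos_monotone_0_pi[of 0 t] by simp
  have a: "cA (2*cos t) 1 1 / (2*1*1) = - cos (2*t)"
    unfolding cA_def cos_double_cos by (simp add: power_mult_distrib)
  have "arccos (- cos (2*t)) = pi - 2*t"
    using assms by (simp add: arccos_minus arccos_cos)
  thus "Aang (2*cos t) 1 1 = pi - 2*t" unfolding Aang_def a .
  have b: "cA 1 (2*cos t) 1 / (2*(2*cos t)*1) = cos t"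
    unfolding cA_def using ct by (simp add: power2_eq_square field_simps)
  show "Aang 1 (2*cos t) 1 = t" unfolding Aang_def b using assms by (simp add: arccos_cos)
  have c: "cA 1 1 (2*cos t) / (2*1*(2*cos t)) = cos t"
    unfolding cA_def using ct by (simp add: power2_eq_square field_simps)
  show "Aang 1 1 (2*cos t) = t" unfolding Aang_def c using assms by (simp add: arccos_cos)
  have "(2*cos t)^2 * (4 - (2*cos t)^2) > 0"
  proof (rule mult_pos_pos)
    show "(2*cos t)^2 > 0" using ct by simp
    have "(cos t)^2 < 1" using ct ct1 by (simp add: power_less_one_iff abs_less_iff)
    thus "4 - (2*cos t)^2 > 0" by (simp add: power_mult_distrib)
  qed
  moreover have "Dh (2*cos t) 1 1 = (2*cos t)^2 * (4 - (2*cos t)^2)"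
    "Dh 1 (2*cos t) 1 = (2*cos t)^2 * (4 - (2*cos t)^2)"
    "Dh 1 1 (2*cos t) = (2*cos t)^2 * (4 - (2*cos t)^2)"
    by (rule Dh_iso)+
  ultimately show "Dh (2*cos t) 1 1 > 0" "Dh 1 (2*cos t) 1 > 0" "Dh 1 1 (2*cos t) > 0" by simp_all
qed

lemma freq:
  fixes m :: int and k :: real
  assumes h: "\<And>t. 0 < t \<Longrightarrow> t < pi/2 \<Longrightarrow> cis (of_int m * t + k) = 1"
  shows "m = 0"
proof (rule ccontr)
  assume m: "m \<noteq> 0"
  define d where "d = pi / (4 * \<bar>of_int m\<bar>)"
  have am: "\<bar>real_of_int m\<bar> \<ge> 1" using m by linarith
  have d0: "d > 0" unfolding d_def using m by simp
  have d1: "d \<le> pi/4" unfolding d_def using am by (simp add: field_simps)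
  have e1: "cis (of_int m * (pi/8) + k) = 1" by (rule h) simp_all
  have e2: "cis (of_int m * (pi/8 + d) + k) = 1" by (rule h) (use d0 d1 in simp_all)
  have "cis (of_int m * (pi/8 + d) + k) = cis (of_int m * (pi/8) + k) * cis (of_int m * d)"
    by (simp add: cis_mult algebra_simps)
  hence "cis (of_int m * d) = 1" using e1 e2 by simp
  hence cosv: "cos (of_int m * d) = 1" by (metis cis.sel(1) one_complex.sel(1))
  have "of_int m * d = pi/4 \<or> of_int m * d = - (pi/4)"
    unfolding d_def using m by (cases "m > 0") (auto simp: field_simps)
  hence "cos (of_int m * d) = cos (pi/4)" by (metis cos_minus)
  hence "cos (of_int m * d) = sqrt 2 / 2" using cos_45 by simp
  with cosv have "sqrt 2 = 2" by simp
  hence "(sqrt 2)^2 = 4" by simp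
  thus False by simp
qed

lemma main_real:
  assumes ai: "alg_indep3 X Y Z" and P0: "X > 0" "Y > 0" "Z > 0" "Dh X Y Z > 0"
    and f0: "ff n1 n2 n3 X Y Z = 0"
  shows "n1 = 0 \<and> n2 = 0 \<and> n3 = 0"
proof -
  note sp = spread[OF ai P0 f0]
  have pos: "2 * cos t > 0" if "0 < t" "t < pi/2" for t using that by (intro mult_pos_pos cos_gt_zero) auto
  have "n2 + n3 - 2*n1 = 0"
  proof (rule freq[where k = "of_int n1 * pi"])
    fix t :: real assume t: "0 < t" "t < pi/2"
    have "cis (ff n1 n2 n3 (2*cos t) 1 1) = 1" using sp pos[OF t] iso_vals[OF t] by simp
    moreover have "ff n1 n2 n3 (2*cos t) 1 1 = of_int (n2 + n3 - 2*n1) * t + of_int n1 * pi"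
      unfolding ff_def iso_vals(1-3)[OF t] by (simp add: algebra_simps)
    ultimately show "cis (of_int (n2 + n3 - 2*n1) * t + of_int n1 * pi) = 1" by simp
  qed
  moreover have "n1 + n3 - 2*n2 = 0"
  proof (rule freq[where k = "of_int n2 * pi"])
    fix t :: real assume t: "0 < t" "t < pi/2"
    have "cis (ff n1 n2 n3 1 (2*cos t) 1) = 1" using sp pos[OF t] iso_vals[OF t] by simp
    moreover have "ff n1 n2 n3 1 (2*cos t) 1 = of_int (n1 + n3 - 2*n2) * t + of_int n2 * pi"
      unfolding ff_def iso_vals(1-3)[OF t] by (simp add: algebra_simps)
    ultimately show "cis (of_int (n1 + n3 - 2*n2) * t + of_int n2 * pi) = 1" by simp
  qed
  moreover have "n1 + n2 - 2*n3 = 0"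
  proof (rule freq[where k = "of_int n3 * pi"])
    fix t :: real assume t: "0 < t" "t < pi/2"
    have "cis (ff n1 n2 n3 1 1 (2*cos t)) = 1" using sp pos[OF t] iso_vals[OF t] by simp
    moreover have "ff n1 n2 n3 1 1 (2*cos t) = of_int (n1 + n2 - 2*n3) * t + of_int n3 * pi"
      unfolding ff_def iso_vals(1-3)[OF t] by (simp add: algebra_simps)
    ultimately show "cis (of_int (n1 + n2 - 2*n3) * t + of_int n3 * pi) = 1" by simp
  qed
  ultimately have eq: "n2 = n1" "n3 = n1" by linarith+
  have "Aang X Y Z + Aang Y X Z + Aang Z X Y > 0"
  proof -
    have "Dh Y X Z > 0" using P0(4) Dh_sym1[where x=X and y=Y and z=Z] by simp
    have "Dh Z X Y > 0" using P0(4) Dh_sym2[where x=X and y=Y and z=Z] by (simp only:)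
    have "Aang X Y Z > 0" "Aang Y X Z > 0" "Aang Z X Y > 0"
      using \<open>Dh Y X Z > 0\<close> \<open>Dh Z X Y > 0\<close> Aang_pos[of Y Z X] Aang_pos[of X Z Y] Aang_pos[of X Y Z] P0 by simp_all
    thus ?thesis by simp
  qed
  moreover have "of_int n1 * (Aang X Y Z + Aang Y X Z + Aang Z X Y) = 0"
    using f0 unfolding ff_def eq by (simp add: algebra_simps)
  ultimately have "n1 = 0" by simp
  thus ?thesis using eq by simp
qed



lemma inner_law: "(Q - P) \<bullet> (R - P) = (norm (Q - P)^2 + norm (R - P)^2 - norm (Q - R)^2) / 2"
  for P Q R :: "real^2"
proof -
  have "Q - R = (Q - P) - (R - P)" by simp
  hence "norm (Q - R)^2 = norm (Q - P)^2 + norm (R - P)^2 - 2 * ((Q - P) \<bullet> (R - P))"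
    by (simp only: power2_norm_eq_inner inner_diff_left inner_diff_right inner_commute) simp
  thus ?thesis by simp
qed

lemma Aang_swap: "Aang x y z = Aang x z y"
  unfolding Aang_def cA_def by (simp add: ac_simps)

lemma Aang_scale: assumes "k > 0" shows "Aang (k*x) (k*y) (k*z) = Aang x y z"
proof -
  have e1: "(k*y)^2 + (k*z)^2 - (k*x)^2 = k^2 * (y^2+z^2-x^2)" by (simp add: power_mult_distrib algebra_simps)
  have e2: "2*(k*y)*(k*z) = k^2*(2*y*z)" by (simp add: power2_eq_square algebra_simps)
  have "k^2 \<noteq> 0" using assms by simp
  thus ?thesis unfolding Aang_def cA_def e1 e2 by simp
qed

lemma vangle: "vertex_angle P Q R = Aang (dist Q R) (dist P Q) (dist P R)"
  unfolding vertex_angle_def Aang_def cA_def inner_law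
  by (simp add: dist_norm norm_minus_commute ac_simps)

lemma Dh_nonneg: "Dh (dist Q R) (dist P Q) (dist P R) \<ge> 0"
  for P Q R :: "real^2"
proof -
  have cs: "\<bar>(Q - P) \<bullet> (R - P)\<bar> \<le> norm (Q - P) * norm (R - P)" by (rule Cauchy_Schwarz_ineq2)
  have c: "cA (dist Q R) (dist P Q) (dist P R) = 2 * ((Q - P) \<bullet> (R - P))"
    unfolding cA_def inner_law by (simp add: dist_norm norm_minus_commute)
  have "(2 * ((Q - P) \<bullet> (R - P)))^2 \<le> (2 * (norm (Q - P) * norm (R - P)))^2"
  proof -
    have "\<bar>(Q - P) \<bullet> (R - P)\<bar>^2 \<le> (norm (Q - P) * norm (R - P))^2" by (rule power_mono[OF cs]) simp
    thus ?thesis by (simp add: power_mult_distrib)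
  qed
  hence "(cA (dist Q R) (dist P Q) (dist P R))^2 \<le> 4 * (dist P Q)^2 * (dist P R)^2"
    unfolding c by (simp add: dist_norm norm_minus_commute power_mult_distrib)
  thus ?thesis using Dh_cA[of "dist P Q" "dist P R" "dist Q R"] by simp
qed

lemma Dh_scale: "Dh (k*x) (k*y) (k*z) = k^4 * Dh x y z"
  unfolding Dh_def by (simp add: power_mult_distrib algebra_simps)

lemma rat_real: "quotient_of a = (p, q) \<Longrightarrow> real_of_rat a = of_int p / of_int q \<and> q > 0"
  using quotient_of_div[of a p q] quotient_of_denom_pos[of a p q]
  by (simp add: of_rat_divide)

theorem proposition2p5:
  fixes A1 A2 A3 :: "real^2"
  assumes "\<not> collinear {A1, A2, A3}"
    and "generic_triangle A1 A2 A3"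
  shows "typical_triangle A1 A2 A3"
proof -
  obtain k where k: "k > 0" and ai: "alg_indep3 (k * dist A2 A3) (k * dist A1 A3) (k * dist A1 A2)"
    using assms(2) unfolding generic_triangle_def by blast
  define X where "X = k * dist A2 A3"
  define Y where "Y = k * dist A1 A3"
  define Z where "Z = k * dist A1 A2"
  note ai = ai[folded X_def Y_def Z_def]
  have nz: "f \<noteq> 0" if "qp F" "F 1 1 1 \<noteq> 0" "F X Y Z = f" for F f
    using generic_zero[OF ai that(1), of 1 1 1] that by auto
  have "X \<noteq> 0" by (rule nz[of "\<lambda>x y z. x"]) (auto intro: qp_x)
  hence X0: "X > 0" unfolding X_def using k by (simp add: order_le_less)
  have "Y \<noteq> 0" by (rule nz[of "\<lambda>x y z. y"]) (auto intro: qp_y)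
  hence Y0: "Y > 0" unfolding Y_def using k by (simp add: order_le_less)
  have "Z \<noteq> 0" by (rule nz[of "\<lambda>x y z. z"]) (auto intro: qp_z)
  hence Z0: "Z > 0" unfolding Z_def using k by (simp add: order_le_less)
  have "Dh X Y Z \<noteq> 0" by (rule nz[OF qp_Dh]) (auto simp: Dh_def)
  moreover have "Dh X Y Z \<ge> 0"
    unfolding X_def Y_def Z_def Dh_scale using Dh_nonneg[where P=A1 and Q=A3 and R=A2] by (simp add: dist_commute)
  ultimately have D0: "Dh X Y Z > 0" by simp
  have a1: "vertex_angle A1 A2 A3 = Aang X Y Z"
    unfolding vangle X_def Y_def Z_def Aang_scale[OF k] by (simp add: Aang_swap[of _ "dist A1 A2"])
  have a2: "vertex_angle A2 A1 A3 = Aang Y X Z"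
    unfolding vangle X_def Y_def Z_def Aang_scale[OF k]
    by (simp add: dist_commute Aang_swap[of "dist A1 A3" "dist A1 A2"])
  have a3: "vertex_angle A3 A1 A2 = Aang Z X Y"
    unfolding vangle X_def Y_def Z_def Aang_scale[OF k]
    by (simp add: dist_commute Aang_swap[of "dist A1 A2"])
  show ?thesis unfolding typical_triangle_def lin_indep3_Q_def a1 a2 a3
  proof (intro allI impI)
    fix a b c :: rat
    assume rel: "of_rat a * Aang X Y Z + of_rat b * Aang Y X Z + of_rat c * Aang Z X Y = 0"
    obtain pa qa where qa: "quotient_of a = (pa, qa)" by (cases "quotient_of a")
    obtain pb qb where qb: "quotient_of b = (pb, qb)" by (cases "quotient_of b")
    obtain pc qc where qc: "quotient_of c = (pc, qc)" by (cases "quotient_of c")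
    note ra = rat_real[OF qa] and rb = rat_real[OF qb] and rc = rat_real[OF qc]
    have "ff (pa*qb*qc) (pb*qa*qc) (pc*qa*qb) X Y Z
        = of_int (qa*qb*qc) * (of_rat a * Aang X Y Z + of_rat b * Aang Y X Z + of_rat c * Aang Z X Y)"
      unfolding ff_def using ra rb rc by (simp add: field_simps)
    hence "ff (pa*qb*qc) (pb*qa*qc) (pc*qa*qb) X Y Z = 0" using rel by simp
    from main_real[OF ai X0 Y0 Z0 D0 this]
    have "pa*qb*qc = 0" "pb*qa*qc = 0" "pc*qa*qb = 0" by auto
    hence "pa = 0" "pb = 0" "pc = 0" using ra rb rc by auto
    thus "a = 0 \<and> b = 0 \<and> c = 0" using ra rb rc by simp
  qed
qed

end
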